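(* Consider an ESP instance with integer weights, fix $\varepsilon>0$, let $W=\sum_{v\in V}w_v$ and $\omega=\lceil \log W/\log(1+\varepsilon)\rceil$. For each $i\in\{0,\dots,\omega\}$ let $T_i$ be the tree obtained by applying a polynomial-time $5/2$-approximation algorithm for the quota version of the prize-collecting Steiner tree problem with quota $q_i=W-W(1+\varepsilon)^{-i}$ (in particular $T_0=(\{r\},\emptyset)$ and $T_\omega$ contains all vertices of positive weight). Let $H$ be the directed graph with vertex set $\{0,\dots,\omega\}$, arcs $(i,j)$ for all $i<j$, and arc costs $c_{i,j}=W(1+\varepsilon)^{-i}\ell(T_j)$, where $\ell(T)=\sum_{e\in E(T)}\ell_e$. Let $P=(n_0,\dots,n_l)$ with $n_0=0$, $n_l=\omega$ be a shortest $(0,\omega)$-path in $H$, and let $\sigma_{\mathrm{Alg}}$ be the expanding search pattern built in $l$ phases, where in phase $j\in\{1,\dots,l\}$ the edges of $T_{n_j}$ having fewer than two endpoints in $\bigcup_{i=0}^{j-1}V(T_{n_i})$ are appended in an order such that the set of explored vertices stays connected (edges both of whose endpoints are already explored being skipped). Then $L(\sigma_{\mathrm{Alg}})\le z$, where $z$ is the cost of a shortest $(0,\omega)$-path in $H$.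
   Context: ESP: connected undirected graph $G=(V,E)$, root $r$, edge lengths $\ell_e\in\mathbb{Z}_{\ge0}$, vertex weights $w_v\in\mathbb{Z}_{\ge0}$, $V^*=\{v:w_v>0\}$. An expanding search pattern is a sequence $\sigma=(e_1,\dots,e_m)$ of edges with $r\in e_1$ such that $\{e_1,\dots,e_i\}$ is a tree for every $i$. For $v\in V^*\setminus\{r\}$, $k_v=\min\{i:v\in e_i\}$, $k_r=0$, latency $L_v(\sigma)=\sum_{i\le k_v}\ell_{e_i}$, total latency $L(\sigma)=\sum_{v\in V^*}w_vL_v(\sigma)$. Quota version of prize-collecting Steiner tree with quota $q$: find a tree in $G$ containing $r$ whose vertices have total weight at least $q$, minimizing its length; a $5/2$-approximation returns such a tree of length at most $5/2$ times the minimum. The cost of a path in $H$ is the sum of its arc costs. *)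

theory Defs
  imports Complex_Main
begin

(* Undirected edges are 2-element vertex sets {a,b}. *)
definition edge_rel :: "'v set set \<Rightarrow> ('v \<times> 'v) set" where
  "edge_rel F = {(a,b). {a,b} \<in> F}"

definition connected_on :: "'v set \<Rightarrow> 'v set set \<Rightarrow> bool" where
  "connected_on U F \<longleftrightarrow> (\<forall>u\<in>U. \<forall>v\<in>U. (u,v) \<in> (edge_rel F)\<^sup>*)"

definition simple_edges :: "'v set \<Rightarrow> 'v set set" where
  "simple_edges U = {{a,b} | a b. a \<noteq> b \<and> a \<in> U \<and> b \<in> U}"

definition is_tree :: "'v set \<Rightarrow> 'v set set \<Rightarrow> bool" where
  "is_tree U F \<longleftrightarrow> finite U \<and> U \<noteq> {} \<and> F \<subseteq> simple_edges U \<and>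
     connected_on U F \<and> card F + 1 = card U"

definition rooted_tree_in :: "'v set \<Rightarrow> 'v set set \<Rightarrow> 'v \<Rightarrow> 'v set \<Rightarrow> 'v set set \<Rightarrow> bool" where
  "rooted_tree_in V E r U F \<longleftrightarrow> U \<subseteq> V \<and> F \<subseteq> E \<and> r \<in> U \<and> is_tree U F"

definition esp_graph :: "'v set \<Rightarrow> 'v set set \<Rightarrow> 'v \<Rightarrow> bool" where
  "esp_graph V E r \<longleftrightarrow> finite V \<and> E \<subseteq> simple_edges V \<and> r \<in> V \<and> connected_on V E"

definition is_esp :: "'v set set \<Rightarrow> 'v \<Rightarrow> 'v set list \<Rightarrow> bool" where
  "is_esp E r \<sigma> \<longleftrightarrow> set \<sigma> \<subseteq> E \<and> (\<sigma> \<noteq> [] \<longrightarrow> r \<in> hd \<sigma>) \<and>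
     (\<forall>i\<in>{1..length \<sigma>}. is_tree (\<Union>(set (take i \<sigma>))) (set (take i \<sigma>)))"

(* latency L_v(sigma); k_v is the (1-based) index of the first edge containing v *)
definition latency :: "('v set \<Rightarrow> nat) \<Rightarrow> 'v \<Rightarrow> 'v set list \<Rightarrow> 'v \<Rightarrow> nat" where
  "latency len r \<sigma> v = (if v = r then 0 else
     sum_list (map len (take (Suc (LEAST i. i < length \<sigma> \<and> v \<in> \<sigma> ! i)) \<sigma>)))"

definition total_latency :: "'v set \<Rightarrow> ('v \<Rightarrow> nat) \<Rightarrow> ('v set \<Rightarrow> nat) \<Rightarrow> 'v \<Rightarrow> 'v set list \<Rightarrow> nat" where
  "total_latency V w len r \<sigma> = (\<Sum>v\<in>{v\<in>V. 0 < w v}. w v * latency len r \<sigma> v)"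

definition elen :: "('v set \<Rightarrow> nat) \<Rightarrow> 'v set set \<Rightarrow> nat" where
  "elen len F = (\<Sum>e\<in>F. len e)"

(* paths from 0 to omega in H: strictly increasing lists *)
definition H_path :: "nat \<Rightarrow> nat list \<Rightarrow> bool" where
  "H_path \<omega> ns \<longleftrightarrow> ns \<noteq> [] \<and> hd ns = 0 \<and> last ns = \<omega> \<and> sorted_wrt (<) ns"

definition path_cost :: "(nat \<Rightarrow> nat \<Rightarrow> real) \<Rightarrow> nat list \<Rightarrow> real" where
  "path_cost c ns = sum_list (map (\<lambda>(i,j). c i j) (zip ns (tl ns)))"

fun skip_append :: "'v set \<Rightarrow> 'v set list \<Rightarrow> 'v set list" where
  "skip_append X [] = []"
| "skip_append X (e # es) =
     (if e \<subseteq> X then skip_append X es else e # skip_append (X \<union> e) es)"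

fun build_phases :: "'v set \<Rightarrow> 'v set list list \<Rightarrow> 'v set list" where
  "build_phases X [] = []"
| "build_phases X (ord # ords) =
     (let s = skip_append X ord in s @ build_phases (X \<union> \<Union>(set s)) ords)"

end

theory Submission
  imports Defs
begin

lemma skip_append_subset: "set (skip_append X es) \<subseteq> set es"
  by (induction es arbitrary: X) auto

lemma skip_append_distinct: "distinct es \<Longrightarrow> distinct (skip_append X es)"
proof (induction es arbitrary: X)
  case (Cons a es)
  then show ?case using skip_append_subset[of _ es] by auto
qed simp

lemma skip_append_cover: "e \<in> set es \<Longrightarrow> e \<subseteq> X \<union> \<Union>(set (skip_append X es))"
proof (induction es arbitrary: X)
  case (Cons a es)
  show ?case
  proof (cases "e = a")
    case True then show ?thesis by auto
  next
    case False
    then have "e \<in> set es" using Cons by simp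
    then have "\<And>Y. e \<subseteq> Y \<union> \<Union>(set (skip_append Y es))" using Cons by blast
    from this[of X] this[of "X \<union> a"] show ?thesis by auto
  qed
qed simp

fun phX :: "'v \<Rightarrow> 'v set list list \<Rightarrow> nat \<Rightarrow> 'v set" where
  "phX r ords 0 = {r}"
| "phX r ords (Suc k) = phX r ords k \<union> \<Union>(set (skip_append (phX r ords k) (ords!k)))"

definition phS :: "'v \<Rightarrow> 'v set list list \<Rightarrow> nat \<Rightarrow> 'v set list" where
  "phS r ords k = skip_append (phX r ords k) (ords!k)"

lemma bp: "k \<le> length ords \<Longrightarrow>
  build_phases (phX r ords k) (drop k ords) = concat (map (phS r ords) [k..<length ords])"
proof (induction "length ords - k" arbitrary: k)
  case 0
  then show ?case by simp
next
  case (Suc n)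
  then have k: "k < length ords" by simp
  have d: "drop k ords = ords!k # drop (Suc k) ords" using k by (simp add: Cons_nth_drop_Suc)
  have u: "[k..<length ords] = k # [Suc k..<length ords]" using k by (simp add: upt_conv_Cons)
  have IH: "build_phases (phX r ords (Suc k)) (drop (Suc k) ords) = concat (map (phS r ords) [Suc k..<length ords])"
    using Suc.hyps(1)[of "Suc k"] Suc.hyps(2) k by simp
  show ?case unfolding d u using IH by (simp add: phS_def Let_def del: upt_Suc)
qed

lemma phX_prefix: "phX r ords j = {r} \<union> \<Union>(set (concat (map (phS r ords) [0..<j])))"
  by (induction j) (auto simp: phS_def)

lemma lat_prefix:
  assumes "\<sigma> = P @ Q" "v \<in> \<Union>(set P)" "v \<noteq> r"
  shows "latency len r \<sigma> v \<le> sum_list (map len P)"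
proof -
  obtain i where i: "i < length P" "v \<in> P!i" using assms(2) by (auto simp: in_set_conv_nth)
  define L where "L = (LEAST i. i < length \<sigma> \<and> v \<in> \<sigma> ! i)"
  have "i < length \<sigma> \<and> v \<in> \<sigma> ! i" using i assms(1) by (simp add: nth_append)
  then have "L \<le> i" unfolding L_def by (rule Least_le)
  then have t: "take (Suc L) \<sigma> = take (Suc L) P" using i assms(1) by simp
  have "latency len r \<sigma> v = sum_list (map len (take (Suc L) P))"
    using assms(3) t by (simp add: latency_def L_def)
  also have "\<dots> \<le> sum_list (map len P)"
  proof -
    have "map len P = map len (take (Suc L) P) @ map len (drop (Suc L) P)"
      by (simp flip: map_append)
    then have "sum_list (map len P) = sum_list (map len (take (Suc L) P)) + sum_list (map len (drop (Suc L) P))"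
      by (metis sum_list_append)
    then show ?thesis by simp
  qed
  finally show ?thesis .
qed

lemma sum_concat_phases: "sum_list (map len (concat (map S [0..<j]))) = (\<Sum>k<j. sum_list (map len (S k)))"
  by (induction j) auto

theorem lemma6:
  fixes V :: "'v set" and E :: "'v set set" and r :: 'v
    and len :: "'v set \<Rightarrow> nat" and w :: "'v \<Rightarrow> nat"
    and \<epsilon> :: real and W :: nat and \<omega> :: nat
    and q :: "nat \<Rightarrow> real"
    and VT :: "nat \<Rightarrow> 'v set" and FT :: "nat \<Rightarrow> 'v set set"
    and c :: "nat \<Rightarrow> nat \<Rightarrow> real"
    and ns :: "nat list" and ords :: "'v set list list" and \<sigma> :: "'v set list"
  assumes G: "esp_graph V E r"
    and eps: "\<epsilon> > 0"
    and W_def: "W = (\<Sum>v\<in>V. w v)"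
    and omega_def: "\<omega> = nat \<lceil>ln (real W) / ln (1 + \<epsilon>)\<rceil>"
    and q_def: "\<And>i. q i = real W - real W / (1 + \<epsilon>) ^ i"
    and T_tree: "\<And>i. i \<le> \<omega> \<Longrightarrow> rooted_tree_in V E r (VT i) (FT i)"
    and T_quota: "\<And>i. i \<le> \<omega> \<Longrightarrow> real (\<Sum>v\<in>VT i. w v) \<ge> q i"
    and T_approx: "\<And>i U F. i \<le> \<omega> \<Longrightarrow> rooted_tree_in V E r U F \<Longrightarrow>
          real (\<Sum>v\<in>U. w v) \<ge> q i \<Longrightarrow> real (elen len (FT i)) \<le> 5/2 * real (elen len F)"
    and T0: "VT 0 = {r}" "FT 0 = {}"
    and Tomega: "{v\<in>V. 0 < w v} \<subseteq> VT \<omega>"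
    and c_def: "\<And>i j. c i j = real W / (1 + \<epsilon>) ^ i * real (elen len (FT j))"
    and P_path: "H_path \<omega> ns"
    and P_shortest: "\<And>ns'. H_path \<omega> ns' \<Longrightarrow> path_cost c ns \<le> path_cost c ns'"
    and ords_len: "length ords = length ns - 1"
    and ords_perm: "\<And>k. k < length ords \<Longrightarrow> distinct (ords ! k) \<and>
          set (ords ! k) = {e \<in> FT (ns ! Suc k). \<not> e \<subseteq> (\<Union>i\<le>k. VT (ns ! i))}"
    and sigma_def: "\<sigma> = build_phases {r} ords"
    and sigma_esp: "is_esp E r \<sigma>"
  shows "real (total_latency V w len r \<sigma>) \<le> path_cost c ns"
proof -
  define m where "m = length ords"
  have ns_ne: "ns \<noteq> []" and hd0: "hd ns = 0" and lastw: "last ns = \<omega>" and srt: "sorted_wrt (<) ns"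
    using P_path by (auto simp: H_path_def)
  have m_eq: "m = length ns - 1" using ords_len m_def by simp
  have nsm: "ns!m = \<omega>" using ns_ne lastw m_eq by (simp add: last_conv_nth)
  have ns_le: "ns!k \<le> \<omega>" if "k < length ns" for k
  proof (cases "k = m")
    case True then show ?thesis using nsm by simp
  next
    case False
    then have "k < m" using that m_eq by simp
    then have "ns!k < ns!m" using srt m_eq ns_ne sorted_wrt_nth_less[OF srt] by auto
    then show ?thesis using nsm by simp
  qed
  have ns0: "ns!0 = 0" using hd0 ns_ne by (simp add: hd_conv_nth)
  have finV: "finite V" using G by (simp add: esp_graph_def)
  have VT_V: "VT i \<subseteq> V" if "i \<le> \<omega>" for i using T_tree[OF that] by (simp add: rooted_tree_in_def)
  have finFT: "finite (FT i)" if "i \<le> \<omega>" for i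
  proof -
    have "FT i \<subseteq> simple_edges (VT i)" "finite (VT i)"
      using T_tree[OF that] by (auto simp: rooted_tree_in_def is_tree_def)
    moreover have "simple_edges (VT i) \<subseteq> Pow (VT i)" by (auto simp: simple_edges_def)
    ultimately show ?thesis by (meson finite_Pow_iff finite_subset)
  qed
  have edge_ex: "\<exists>e\<in>FT i. v \<in> e" if "i \<le> \<omega>" "v \<in> VT i" "v \<noteq> r" for i v
  proof -
    have "r \<in> VT i" "connected_on (VT i) (FT i)"
      using T_tree[OF that(1)] by (auto simp: rooted_tree_in_def is_tree_def)
    then have "(r, v) \<in> (edge_rel (FT i))\<^sup>*" using that(2) by (simp add: connected_on_def)
    then show ?thesis using that(3)
      by (cases rule: rtranclE) (auto simp: edge_rel_def)
  qed
  define D where "D k = (\<Union>i\<le>k. VT (ns!i))" for k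
  define X where "X = phX r ords"
  define S where "S = phS r ords"
  have rD: "r \<in> D k" for k using ns0 T0 unfolding D_def by force
  have key: "D k \<subseteq> X k" if "k \<le> m" for k
    using that
  proof (induction k)
    case 0
    then show ?case using ns0 T0 by (simp add: D_def X_def)
  next
    case (Suc k)
    then have k: "k < m" by simp
    have IH: "D k \<subseteq> X k" using Suc k by simp
    have XS: "X (Suc k) = X k \<union> \<Union>(set (skip_append (X k) (ords!k)))" by (simp add: X_def)
    have DS: "D (Suc k) = D k \<union> VT (ns!Suc k)" by (auto simp: D_def atMost_Suc)
    have le: "ns!Suc k \<le> \<omega>" using ns_le k m_eq by simp
    have "VT (ns!Suc k) \<subseteq> X (Suc k)"
    proof
      fix v assume v: "v \<in> VT (ns!Suc k)"
      show "v \<in> X (Suc k)"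
      proof (cases "v \<in> D k")
        case True then show ?thesis using IH XS by blast
      next
        case False
        then have "v \<noteq> r" using rD by auto
        then obtain e where e: "e \<in> FT (ns!Suc k)" "v \<in> e" using edge_ex[OF le v] by blast
        then have "e \<in> set (ords!k)" using ords_perm[of k] k m_def False by (auto simp: D_def)
        then have "e \<subseteq> X k \<union> \<Union>(set (skip_append (X k) (ords!k)))" by (rule skip_append_cover)
        then show ?thesis using e XS by blast
      qed
    qed
    then show ?case using IH XS DS by blast
  qed
  have sig: "\<sigma> = concat (map S [0..<m])"
    using bp[of 0 ords r] sigma_def by (simp add: S_def m_def)
  define a where "a k = elen len (FT (ns!Suc k))" for k
  have phase_le: "sum_list (map len (S k)) \<le> a k" if "k < m" for k
  proof -
    have le: "ns!Suc k \<le> \<omega>" using ns_le that m_eq by simp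
    have "distinct (S k)" using ords_perm[of k] that m_def by (simp add: S_def phS_def skip_append_distinct)
    then have "sum_list (map len (S k)) = sum len (set (S k))" by (rule sum_list_distinct_conv_sum_set)
    also have "\<dots> \<le> sum len (FT (ns!Suc k))"
      apply (rule sum_mono2[OF finFT[OF le]])
      using ords_perm[of k] that m_def skip_append_subset[of "X k" "ords!k"] by (auto simp: S_def phS_def X_def)
    finally show ?thesis by (simp add: a_def elen_def)
  qed
  have lat1: "latency len r \<sigma> v \<le> (\<Sum>k<j. a k)" if "v \<noteq> r" "j \<le> m" "v \<in> D j" for v j
  proof -
    have split: "\<sigma> = concat (map S [0..<j]) @ concat (map S [j..<m])"
      using sig that(2) by (metis concat_append le_add_diff_inverse map_append upt_add_eq_append zero_le)
    have "v \<in> X j" using key that by blast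
    then have "v \<in> \<Union>(set (concat (map S [0..<j])))" using that(1) phX_prefix[of r ords j]
      by (simp add: X_def S_def)
    then have "latency len r \<sigma> v \<le> sum_list (map len (concat (map S [0..<j])))"
      using lat_prefix[OF split _ that(1)] by blast
    also have "\<dots> = (\<Sum>k<j. sum_list (map len (S k)))" by (rule sum_concat_phases)
    also have "\<dots> \<le> (\<Sum>k<j. a k)" using phase_le that(2) by (intro sum_mono) auto
    finally show ?thesis .
  qed
  have lat2: "latency len r \<sigma> v \<le> (\<Sum>k<m. if v \<notin> D k then a k else 0)" if "v \<in> V" "0 < w v" for v
  proof (cases "v = r")
    case True then show ?thesis by (simp add: latency_def)
  next
    case False
    have "v \<in> D m" using Tomega that nsm unfolding D_def by blast
    define j where "j = (LEAST j. v \<in> D j)"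
    have jm: "j \<le> m" unfolding j_def using \<open>v \<in> D m\<close> by (rule Least_le)
    have vj: "v \<in> D j" unfolding j_def using \<open>v \<in> D m\<close> by (rule LeastI)
    have nk: "v \<notin> D k" if "k < j" for k using not_less_Least[of k "\<lambda>j. v \<in> D j"] that j_def by blast
    have "latency len r \<sigma> v \<le> (\<Sum>k<j. a k)" using lat1[OF False jm vj] .
    also have "\<dots> = (\<Sum>k<j. if v \<notin> D k then a k else 0)" using nk by (intro sum.cong) auto
    also have "\<dots> \<le> (\<Sum>k<m. if v \<notin> D k then a k else 0)"
      by (rule sum_mono2) (use jm in auto)
    finally show ?thesis .
  qed
  define Vp where "Vp = {v\<in>V. 0 < w v}"
  define B where "B k = (\<Sum>v\<in>{v\<in>Vp. v \<notin> D k}. w v)" for k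
  have finVp: "finite Vp" using finV by (simp add: Vp_def)
  have "total_latency V w len r \<sigma> \<le> (\<Sum>v\<in>Vp. w v * (\<Sum>k<m. if v \<notin> D k then a k else 0))"
    unfolding total_latency_def Vp_def[symmetric]
    by (intro sum_mono mult_le_mono2) (use lat2 in \<open>auto simp: Vp_def\<close>)
  also have "\<dots> = (\<Sum>k<m. a k * B k)"
  proof -
    have "(\<Sum>v\<in>Vp. w v * (\<Sum>k<m. if v \<notin> D k then a k else 0))
        = (\<Sum>v\<in>Vp. \<Sum>k<m. (if v \<notin> D k then a k * w v else 0))"
      unfolding sum_distrib_left by (intro sum.cong refl) auto
    also have "\<dots> = (\<Sum>k<m. \<Sum>v\<in>Vp. (if v \<notin> D k then a k * w v else 0))"
      by (rule sum.swap)
    also have "\<dots> = (\<Sum>k<m. a k * B k)"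
    proof (rule sum.cong[OF refl])
      fix k
      have "a k * B k = (\<Sum>v\<in>{v\<in>Vp. v \<notin> D k}. a k * w v)"
        unfolding B_def by (rule sum_distrib_left)
      also have "\<dots> = (\<Sum>v\<in>Vp. if v \<notin> D k then a k * w v else 0)"
        by (rule sum.inter_filter[OF finVp])
      finally show "(\<Sum>v\<in>Vp. if v \<notin> D k then a k * w v else 0) = a k * B k" by (rule sym)
    qed
    finally show ?thesis .
  qed
  finally have totn: "total_latency V w len r \<sigma> \<le> (\<Sum>k<m. a k * B k)" .
  then have "real (total_latency V w len r \<sigma>) \<le> real (\<Sum>k<m. a k * B k)"
    by (simp only: of_nat_le_iff)
  then have tot: "real (total_latency V w len r \<sigma>) \<le> (\<Sum>k<m. real (a k) * real (B k))"
    by (simp only: of_nat_sum of_nat_mult)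
  have Bk: "real (B k) \<le> real W / (1 + \<epsilon>) ^ (ns!k)" if "k < m" for k
  proof -
    have le: "ns!k \<le> \<omega>" using ns_le that m_eq by simp
    have "{v\<in>Vp. v \<notin> D k} \<subseteq> V - VT (ns!k)" unfolding Vp_def D_def by auto
    then have "B k \<le> (\<Sum>v\<in>V - VT (ns!k). w v)" unfolding B_def
      by (intro sum_mono2) (use finV in auto)
    moreover have "real (\<Sum>v\<in>V - VT (ns!k). w v) + real (\<Sum>v\<in>VT (ns!k). w v) = real W"
      using sum.subset_diff[OF VT_V[OF le] finV, of w] W_def by simp
    moreover have "real (\<Sum>v\<in>VT (ns!k). w v) \<ge> real W - real W / (1 + \<epsilon>) ^ (ns!k)"
      using T_quota[OF le] q_def by simp
    ultimately show ?thesis by linarith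
  qed
  have pc: "path_cost c ns = (\<Sum>k<m. real W / (1 + \<epsilon>) ^ (ns!k) * real (a k))"
  proof -
    have "path_cost c ns = (\<Sum>k = 0..<length (zip ns (tl ns)). (\<lambda>(i,j). c i j) (zip ns (tl ns) ! k))"
      unfolding path_cost_def by (simp add: sum_list_sum_nth)
    also have "\<dots> = (\<Sum>k<m. c (ns!k) (ns!Suc k))"
      using m_eq ns_ne by (intro sum.cong) (auto simp: nth_tl)
    finally show ?thesis by (simp add: c_def a_def)
  qed
  have "(\<Sum>k<m. real (a k) * real (B k)) \<le> (\<Sum>k<m. real W / (1 + \<epsilon>) ^ (ns!k) * real (a k))"
  proof (rule sum_mono)
    fix k assume "k \<in> {..<m}"
    then have "real (B k) \<le> real W / (1 + \<epsilon>) ^ (ns!k)" using Bk by simp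
    then have "real (a k) * real (B k) \<le> real (a k) * (real W / (1 + \<epsilon>) ^ (ns!k))"
      by (rule mult_left_mono) simp
    then show "real (a k) * real (B k) \<le> real W / (1 + \<epsilon>) ^ (ns!k) * real (a k)"
      by (simp only: mult.commute)
  qed
  then show ?thesis using tot pc by simp
qed

end
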